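(* Fix an association $\kappa$ in which every UE is served by at least one cell and every cell serves at least one UE, and fix a demand vector $\bm{d}\in\mathbb{R}^m_{>0}$. Let $\bm{p}\in\mathbb{R}^n_{>0}$, let $\alpha>1$, and set $\bm{p}'=\bm{p}/\alpha$. Let $\bm{x}$ be the fixed point $\bm{x}=\bm{f}(\bm{h}(\bm{x},\bm{p},\kappa),\bm{d},\kappa)$, and let $\bm{x}'$ be the fixed point $\bm{x}'=\bm{f}(\bm{h}(\bm{x}',\bm{p}',\kappa),\bm{d},\kappa)$. Then $\bm{p}'^{\mathsf T}\bm{x}'\le\bm{p}^{\mathsf T}\bm{x}$.
   Context: Cellular network model. $\mathcal{I}$ is a set of $n$ cells and $\mathcal{J}$ a set of $m$ UEs. For an association $\kappa\in\{0,1\}^{n\times m}$, let $\mathcal{I}_j=\{i:\kappa_{ij}=1\}$ and $\mathcal{J}_i=\{j:\kappa_{ij}=1\}$. $M,B>0$ are constants, $\sigma^2>0$ is the noise power and $g_{ij}>0$ are the channel gains. For $\bm{x}\in\mathbb{R}^n_{\ge0}$ and $\bm{p}\in\mathbb{R}^n_{>0}$: - $h_j(\bm{x},\bm{p},\kappa)=\dfrac{\sum_{i\in\mathcal{I}_j}p_ig_{ij}}{\sum_{k\in\mathcal{I}\setminus\mathcal{I}_j}p_kg_{kj}x_k+\sigma^2}$; - $f_i(\bm{\gamma},\bm{d},\kappa)=\sum_{j\in\mathcal{J}_i}\dfrac{d_j}{MB\log_2(1+\gamma_j)}$. It is known, and assumed here, that for fixed $\bm{p},\bm{d},\kappa$ the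 map $\bm{x}\mapsto\bm{f}(\bm{h}(\bm{x},\bm{p},\kappa),\bm{d},\kappa)$ has a unique fixed point in $\mathbb{R}^n_{\ge0}$. *)

theory Defs
  imports Complex_Main
begin

text \<open>Cells are elements of a finite type 'i, UEs of a finite type 'j.
  An association kappa is a relation kappa i j (cell i serves UE j).
  Vectors are functions on the index type.\<close>

definition served_by :: "('i \<Rightarrow> 'j \<Rightarrow> bool) \<Rightarrow> 'j \<Rightarrow> 'i set" where
  "served_by \<kappa> j = {i. \<kappa> i j}"

definition serves :: "('i \<Rightarrow> 'j \<Rightarrow> bool) \<Rightarrow> 'i \<Rightarrow> 'j set" where
  "serves \<kappa> i = {j. \<kappa> i j}"

definition hfun :: "real \<Rightarrow> ('i::finite \<Rightarrow> 'j \<Rightarrow> real) \<Rightarrow> ('i \<Rightarrow> real) \<Rightarrow> ('i \<Rightarrow> real)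
    \<Rightarrow> ('i \<Rightarrow> 'j \<Rightarrow> bool) \<Rightarrow> 'j \<Rightarrow> real" where
  "hfun \<sigma>2 g x p \<kappa> j =
     (\<Sum>i\<in>served_by \<kappa> j. p i * g i j) /
     ((\<Sum>k\<in>UNIV - served_by \<kappa> j. p k * g k j * x k) + \<sigma>2)"

definition ffun :: "real \<Rightarrow> real \<Rightarrow> ('j::finite \<Rightarrow> real) \<Rightarrow> ('j \<Rightarrow> real)
    \<Rightarrow> ('i \<Rightarrow> 'j \<Rightarrow> bool) \<Rightarrow> 'i \<Rightarrow> real" where
  "ffun M B \<gamma> d \<kappa> i = (\<Sum>j\<in>serves \<kappa> i. d j / (M * B * log 2 (1 + \<gamma> j)))"

definition loadmap :: "real \<Rightarrow> real \<Rightarrow> real \<Rightarrow> ('i::finite \<Rightarrow> 'j::finite \<Rightarrow> real)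
    \<Rightarrow> ('i \<Rightarrow> real) \<Rightarrow> ('j \<Rightarrow> real) \<Rightarrow> ('i \<Rightarrow> 'j \<Rightarrow> bool) \<Rightarrow> ('i \<Rightarrow> real) \<Rightarrow> ('i \<Rightarrow> real)" where
  "loadmap M B \<sigma>2 g p d \<kappa> x = ffun M B (hfun \<sigma>2 g x p \<kappa>) d \<kappa>"

end

theory Submission
  imports Defs "HOL-Analysis.Analysis"
begin

lemma log_scale:
  fixes h c :: real assumes "h \<ge> 0" "c \<ge> 1"
  shows "log 2 (1 + h) \<le> c * log 2 (1 + h / c)"
proof -
  have cc: "concave_on {0<..} (\<lambda>x. log 2 x)" by (rule log_concave) simp
  have u: "1 - 1/c \<ge> 0" "1/c \<ge> 0" using assms by (auto simp: field_simps)
  have "(1 - 1/c) * log 2 1 + (1/c) * log 2 (1+h) \<le> log 2 ((1 - 1/c) *\<^sub>R 1 + (1/c) *\<^sub>R (1+h))"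
    using cc[unfolded concave_on_iff] u assms
    by (metis (no_types) diff_add_cancel greaterThan_iff zero_less_one add_pos_nonneg)
  also have "(1 - 1/c) *\<^sub>R 1 + (1/c) *\<^sub>R (1+h) = 1 + h/c" using assms by (simp add: field_simps)
  finally have "(1/c) * log 2 (1+h) \<le> log 2 (1 + h/c)" by simp
  then show ?thesis using assms by (simp add: field_simps)
qed

lemma quot_ineq:
  fixes M B d L L' c :: real
  assumes "M > 0" "B > 0" "d > 0" "L > 0" "L' > 0" "L < c * L'"
  shows "d / (M * B * L') < c * (d / (M * B * L))"
proof -
  have c: "c > 0" using assms by (smt (verit) zero_less_mult_iff)
  have "d / (M * B * L') = c * (d / (M * B * (c * L')))" using c assms by (simp add: field_simps)
  also have "d / (M * B * (c * L')) < d / (M * B * L)"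
    using assms c by (intro divide_strict_left_mono) (auto intro!: mult_pos_pos)
  hence "c * (d / (M * B * (c * L'))) < c * (d / (M * B * L))" using c by (rule mult_strict_left_mono)
  finally show ?thesis .
qed

theorem theorem1:
  fixes M B \<sigma>2 \<alpha> :: real
    and g :: "'i::finite \<Rightarrow> 'j::finite \<Rightarrow> real"
    and \<kappa> :: "'i \<Rightarrow> 'j \<Rightarrow> bool"
    and d :: "'j \<Rightarrow> real"
    and p x x' :: "'i \<Rightarrow> real"
  assumes M: "M > 0" and B: "B > 0" and \<sigma>: "\<sigma>2 > 0"
    and g: "\<forall>i j. g i j > 0"
    and ue_served: "\<forall>j. \<exists>i. \<kappa> i j"
    and cell_serves: "\<forall>i. \<exists>j. \<kappa> i j"
    and d: "\<forall>j. d j > 0"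
    and p: "\<forall>i. p i > 0"
    and \<alpha>: "\<alpha> > 1"
    and uniq: "\<forall>q::'i \<Rightarrow> real. (\<forall>i. q i > 0) \<longrightarrow>
                 (\<exists>!y. (\<forall>i. y i \<ge> 0) \<and> loadmap M B \<sigma>2 g q d \<kappa> y = y)"
    and x_nonneg: "\<forall>i. x i \<ge> 0"
    and x_fix: "loadmap M B \<sigma>2 g p d \<kappa> x = x"
    and x'_nonneg: "\<forall>i. x' i \<ge> 0"
    and x'_fix: "loadmap M B \<sigma>2 g (\<lambda>i. p i / \<alpha>) d \<kappa> x' = x'"
  shows "(\<Sum>i\<in>UNIV. (p i / \<alpha>) * x' i) \<le> (\<Sum>i\<in>UNIV. p i * x i)"
proof -
  define S where "S j = (\<Sum>i\<in>served_by \<kappa> j. p i * g i j)" for j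
  define I where "I j = (\<Sum>k\<in>UNIV - served_by \<kappa> j. p k * g k j * x k)" for j
  define h where "h j = hfun \<sigma>2 g x p \<kappa> j" for j
  define h' where "h' j = hfun \<sigma>2 g x' (\<lambda>i. p i / \<alpha>) \<kappa> j" for j
  have Spos: "S j > 0" for j
  proof -
    obtain i where "\<kappa> i j" using ue_served by blast
    hence "served_by \<kappa> j \<noteq> {}" by (auto simp: served_by_def)
    thus ?thesis unfolding S_def using p g by (intro sum_pos) (auto intro!: mult_pos_pos)
  qed
  have Inn: "I j \<ge> 0" for j
    unfolding I_def using p g x_nonneg by (intro sum_nonneg mult_nonneg_nonneg) (auto simp: less_imp_le)
  have hdef: "h j = S j / (I j + \<sigma>2)" for j
    by (simp add: h_def hfun_def S_def I_def)
  have hpos: "h j > 0" for j unfolding hdef using Spos[of j] Inn[of j] \<sigma> by (intro divide_pos_pos) auto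
  have Lpos: "log 2 (1 + h j) > 0" for j using hpos[of j] by simp
  have xe: "x i = (\<Sum>j\<in>serves \<kappa> i. d j / (M * B * log 2 (1 + h j)))" for i
    using fun_cong[OF x_fix, of i] by (simp add: loadmap_def ffun_def h_def)
  have x'e: "x' i = (\<Sum>j\<in>serves \<kappa> i. d j / (M * B * log 2 (1 + h' j)))" for i
    using fun_cong[OF x'_fix, of i] by (simp add: loadmap_def ffun_def h'_def)
  have sne: "serves \<kappa> i \<noteq> {}" for i using cell_serves by (auto simp: serves_def)
  have xpos: "x i > 0" for i
    unfolding xe using sne[of i] d M B Lpos by (intro sum_pos) (auto intro!: divide_pos_pos mult_pos_pos)
  define r where "r i = x' i / (\<alpha> * x i)" for i
  define t where "t = Max (range r)"
  obtain i0 where i0: "r i0 = t" proof -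
    have "Max (range r) \<in> range r" by (rule Max_in) auto
    then obtain i where "Max (range r) = r i" by blast
    then show ?thesis using that unfolding t_def by simp
  qed
  have rle: "r k \<le> t" for k unfolding t_def by (rule Max_ge) auto
  have apos: "\<alpha> > 0" using \<alpha> by simp
  have t1: "t \<le> 1"
  proof (rule ccontr)
    assume "\<not> t \<le> 1"
    hence t: "t > 1" by simp
    define c where "c = t * \<alpha>"
    have c1: "c \<ge> 1" using t \<alpha> unfolding c_def by (smt (verit) mult_less_cancel_right1)
    have cpos: "c > 0" using c1 by simp
    have x'le: "x' k \<le> c * x k" for k
    proof -
      have "x' k / (\<alpha> * x k) \<le> t" using rle[of k] by (simp add: r_def)
      thus ?thesis using xpos[of k] apos unfolding c_def by (simp add: field_simps)
    qed
    have x'eq: "x' i0 = c * x i0"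
      using i0 xpos[of i0] apos unfolding r_def c_def by (simp add: field_simps)
    have step: "d j / (M * B * log 2 (1 + h' j)) < c * (d j / (M * B * log 2 (1 + h j)))" for j
    proof -
      define D' where "D' = (\<Sum>k\<in>UNIV - served_by \<kappa> j. p k / \<alpha> * g k j * x' k) + \<sigma>2"
      have num: "(\<Sum>i\<in>served_by \<kappa> j. p i / \<alpha> * g i j) = S j / \<alpha>"
        unfolding S_def by (simp add: sum_divide_distrib)
      have h'd: "h' j = (S j / \<alpha>) / D'"
        unfolding h'_def hfun_def D'_def num by simp
      have "(\<Sum>k\<in>UNIV - served_by \<kappa> j. p k / \<alpha> * g k j * x' k)
            \<le> (\<Sum>k\<in>UNIV - served_by \<kappa> j. t * (p k * g k j * x k))"
      proof (rule sum_mono)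
        fix k
        have "p k / \<alpha> * g k j \<ge> 0" using p g apos by (simp add: less_imp_le)
        hence "p k / \<alpha> * g k j * x' k \<le> p k / \<alpha> * g k j * (c * x k)"
          using x'le[of k] by (metis mult_left_mono)
        also have "\<dots> = t * (p k * g k j * x k)" unfolding c_def using apos by (simp add: field_simps)
        finally show "p k / \<alpha> * g k j * x' k \<le> t * (p k * g k j * x k)" .
      qed
      hence D'le: "D' \<le> t * I j + \<sigma>2" unfolding D'_def I_def by (simp add: sum_distrib_left)
      have D'pos: "D' > 0" unfolding D'_def using p g x'_nonneg apos \<sigma>
        by (intro add_nonneg_pos sum_nonneg mult_nonneg_nonneg) (auto simp: less_imp_le)
      have lt: "D' < t * (I j + \<sigma>2)" using D'le t \<sigma> by (smt (verit) mult_less_cancel_right1 distrib_left)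
      have "h j / c = (S j / \<alpha>) / (t * (I j + \<sigma>2))"
        unfolding hdef c_def using apos by (simp add: field_simps)
      also have "\<dots> < (S j / \<alpha>) / D'"
        using lt D'pos Spos[of j] apos by (intro divide_strict_left_mono) auto
      finally have hh: "h j / c < h' j" using h'd by simp
      have hc0: "h j / c > 0" using hpos[of j] cpos by simp
      have "log 2 (1 + h j / c) < log 2 (1 + h' j)"
        using hh hc0 by (subst log_less_cancel_iff) auto
      hence "log 2 (1 + h j) < c * log 2 (1 + h' j)"
        using log_scale[of "h j" c] hpos[of j] c1 cpos by (smt (verit) mult_strict_left_mono)
      moreover have "log 2 (1 + h' j) > 0" using hh hc0 by simp
      ultimately show ?thesis using quot_ineq M B d Lpos by blast
    qed
    have "x' i0 < (\<Sum>j\<in>serves \<kappa> i0. c * (d j / (M * B * log 2 (1 + h j))))"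
      unfolding x'e using sne[of i0] step by (intro sum_strict_mono) auto
    also have "\<dots> = c * x i0" unfolding xe by (simp add: sum_distrib_left)
    finally show False using x'eq by simp
  qed
  show ?thesis
  proof (rule sum_mono)
    fix i
    have "x' i / (\<alpha> * x i) \<le> 1" using rle[of i] t1 by (simp add: r_def)
    hence "x' i \<le> \<alpha> * x i" using xpos[of i] apos by (simp add: field_simps)
    hence "p i * x' i \<le> p i * (\<alpha> * x i)" using p by (simp add: less_imp_le mult_left_mono)
    thus "p i / \<alpha> * x' i \<le> p i * x i" using apos by (simp add: field_simps)
  qed
qed

end
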